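(* In the two-type setting, suppose $\phi_1\sigma>1$, and let $r=\inf\{\lambda_1(p):p\in(0,\bar p_1]\times[0,\bar p_2]\}$. Let $p^0\in(0,1)^2$ with $p^0_1+p^0_2\le1$ and $p^n=h^n(p^0)$. Then there is $\bar c\in(0,p^0_1)$ such that for every $c\in(0,\bar c]$ there is $\bar k\in\mathbb N$ with the property: for all $n\in\mathbb N$, if $p^n_1\ge c$ then there is $k\le\bar k$ with $p^{n+k}_1>\frac{3}{2r}c$.
   Context: Two-type limiting map: $\beta_1,\beta_2>0$, $\alpha(1),\alpha(2)\in[0,1)$, $\phi_i=(1-\alpha(i))\beta_i$. For $p\in[0,1]^2$, $S(p)=\beta_1p_1+\beta_2p_2$ and $f^{(i)}(p)=(1-e^{-S(p)})\beta_ip_i/S(p)$ ($=0$ if $S(p)=0$). For $\alpha\in(0,1)$ let $g_\alpha(x)=\frac{(1-\sqrt{1-4(1-\alpha)x(1-x)})^3}{8(1-\alpha)^2x^2}$ for $x\in(0,1]$ and $g_\alpha(0)=0$; let $g_0(x)=x$ for $x\le1/2$ and $g_0(x)=(1-x)^3/x^2$ for $x>1/2$. $h(p)=(h_1(p),h_2(p))$ with $h_i(p)=g_{\alpha(i)}(f^{(i)}(p))$; $\lambda_i(p)=h_i(p)/p_i$ for $p_i>0$. $\bar p_i=\sup_{x\in[0,1]}g_{\alpha(i)}(x)$. $\psi(x)=(1-e^{-x})/x$, $\psi(0)=1$. For $x\in[0,1]$ let $\Psi_n(x)=\big(\prod_{k=0}^{n-1}\psi(\beta_2h^k_2(0,x))\big)^{1/n}$,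 $\underline\Psi(x)=\liminf_{n\to\infty}\Psi_n(x)$, and $\sigma=\inf_{x\in[0,\bar p_2]}\underline\Psi(x)$. *)

theory Defs
  imports "HOL-Analysis.Analysis"
begin

definition S2 :: "real \<Rightarrow> real \<Rightarrow> real \<times> real \<Rightarrow> real" where
  "S2 b1 b2 p = b1 * fst p + b2 * snd p"

definition fmap :: "real \<Rightarrow> real \<Rightarrow> real \<Rightarrow> real \<Rightarrow> real \<times> real \<Rightarrow> real" where
  "fmap b1 b2 bi qi p =
     (if S2 b1 b2 p = 0 then 0 else (1 - exp (- S2 b1 b2 p)) * bi * qi / S2 b1 b2 p)"

definition gfun :: "real \<Rightarrow> real \<Rightarrow> real" where
  "gfun a x =
     (if a = 0 then (if x \<le> 1/2 then x else (1 - x)^3 / x^2)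
      else if x = 0 then 0
      else (1 - sqrt (1 - 4 * (1 - a) * x * (1 - x)))^3 / (8 * (1 - a)^2 * x^2))"

definition hmap :: "real \<Rightarrow> real \<Rightarrow> real \<Rightarrow> real \<Rightarrow> real \<times> real \<Rightarrow> real \<times> real" where
  "hmap b1 b2 a1 a2 p =
     (gfun a1 (fmap b1 b2 b1 (fst p) p), gfun a2 (fmap b1 b2 b2 (snd p) p))"

text \<open>lambda_1(p) = h_1(p)/p_1 (used only for p_1 > 0).\<close>
definition lam1 :: "real \<Rightarrow> real \<Rightarrow> real \<Rightarrow> real \<Rightarrow> real \<times> real \<Rightarrow> real" where
  "lam1 b1 b2 a1 a2 p = fst (hmap b1 b2 a1 a2 p) / fst p"

definition pbar :: "real \<Rightarrow> real" where
  "pbar a = (SUP x\<in>{0..1}. gfun a x)"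

definition psi :: "real \<Rightarrow> real" where
  "psi x = (if x = 0 then 1 else (1 - exp (- x)) / x)"

definition Psi_n :: "real \<Rightarrow> real \<Rightarrow> real \<Rightarrow> real \<Rightarrow> nat \<Rightarrow> real \<Rightarrow> real" where
  "Psi_n b1 b2 a1 a2 n x =
     (\<Prod>k<n. psi (b2 * snd ((hmap b1 b2 a1 a2 ^^ k) (0, x)))) powr (1 / real n)"

definition Psi_liminf :: "real \<Rightarrow> real \<Rightarrow> real \<Rightarrow> real \<Rightarrow> real \<Rightarrow> ereal" where
  "Psi_liminf b1 b2 a1 a2 x = liminf (\<lambda>n. ereal (Psi_n b1 b2 a1 a2 n x))"

definition sigma :: "real \<Rightarrow> real \<Rightarrow> real \<Rightarrow> real \<Rightarrow> ereal" where
  "sigma b1 b2 a1 a2 = (INF x\<in>{0..pbar a2}. Psi_liminf b1 b2 a1 a2 x)"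

end

theory Submission imports Defs begin

lemma psi_mult: "x * psi x = 1 - exp (- x)"
  by (simp add: psi_def)

lemma psi_pos: "x \<ge> 0 \<Longrightarrow> psi x > 0"
  unfolding psi_def by (auto simp: divide_pos_pos)

lemma psi_lim0: "(psi \<longlongrightarrow> 1) (at 0)"
proof -
  have d: "((\<lambda>x. 1 - exp (- x)) has_field_derivative 1) (at (0::real))"
    by (auto intro!: derivative_eq_intros)
  have "((\<lambda>x. ((1 - exp (- x)) - (1 - exp (- 0))) / (x - 0)) \<longlongrightarrow> (1::real)) (at 0)"
    using d unfolding has_field_derivative_iff by simp
  then have "((\<lambda>x. (1 - exp (- x)) / x) \<longlongrightarrow> (1::real)) (at 0)" by simp
  then show ?thesis
    by (rule Lim_transform_eventually) (auto simp: psi_def eventually_at_filter)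
qed

lemma isCont_psi: "isCont psi x"
proof (cases "x = 0")
  case True
  then show ?thesis using psi_lim0 by (simp add: isCont_def psi_def)
next
  case False
  have "isCont (\<lambda>y. (1 - exp (- y)) / y) x" using False by (auto intro!: continuous_intros)
  moreover have "\<forall>\<^sub>F y in nhds x. (1 - exp (- y)) / y = psi y"
    using eventually_nhds_in_open[of "-{0}" x] False
    by (auto elim!: eventually_mono simp: psi_def)
  ultimately show ?thesis using isCont_cong by metis
qed

lemma continuous_on_psi[continuous_intros]:
  "continuous_on S f \<Longrightarrow> continuous_on S (\<lambda>x. psi (f x))"
  by (rule continuous_on_compose2[of UNIV psi]) (auto intro: continuous_at_imp_continuous_on isCont_psi)

definition Gf :: "real \<Rightarrow> real \<Rightarrow> real" where
  "Gf a x = 8*(1-a)*(1-x)^3 / (1 + sqrt (max 0 (1 - 4*(1-a)*x*(1-x))))^3"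

lemma continuous_on_Gf[continuous_intros]:
  "continuous_on S f \<Longrightarrow> continuous_on S (\<lambda>x. Gf a (f x))"
  unfolding Gf_def
  by (intro continuous_intros) (auto simp: add_nonneg_eq_0_iff)

lemma Gf0: "Gf a 0 = 1 - a" by (simp add: Gf_def)

lemma Gf_pos: "a < 1 \<Longrightarrow> x < 1 \<Longrightarrow> Gf a x > 0"
proof -
  assume "a < 1" "x < 1"
  then have "0 < 8*(1-a)*(1-x)^3" by simp
  moreover have "0 < (1 + sqrt (max 0 (1 - 4*(1-a)*x*(1-x))))^3"
    by (intro zero_less_power add_pos_nonneg) auto
  ultimately show ?thesis unfolding Gf_def by (rule divide_pos_pos)
qed

lemma gfun_eq:
  assumes "0 \<le> a" "a < 1" "0 \<le> x" "x \<le> 1"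
  shows "gfun a x = x * Gf a x"
proof -
  have "0 \<le> (2*x-1)^2" by simp
  then have q: "4*x*(1-x) \<le> 1" by (simp add: power2_eq_square algebra_simps)
  define u where "u = 4*(1-a)*x*(1-x)"
  have u0: "0 \<le> u" using assms by (simp add: u_def)
  have "0 \<le> 4*x*(1-x)" using assms by simp
  then have "(1-a) * (4*x*(1-x)) \<le> 1 * (4*x*(1-x))" using assms by (intro mult_right_mono) auto
  then have "(1-a) * (4*x*(1-x)) \<le> 1" using q by linarith
  then have u1: "u \<le> 1" unfolding u_def by (simp add: algebra_simps)
  define s where "s = sqrt (1 - u)"
  have s0: "0 \<le> s" "s \<le> 1" using u0 u1 by (auto simp: s_def)
  have ss: "s^2 = 1 - u" using u1 by (simp add: s_def)
  have mx: "max 0 (1 - 4*(1-a)*x*(1-x)) = 1 - u" using u1 by (simp add: u_def)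
  have Gs: "Gf a x = 8*(1-a)*(1-x)^3 / (1+s)^3" using mx by (simp add: Gf_def s_def)
  show ?thesis
  proof (cases "a = 0")
    case True
    have "1 - u = (1 - 2*x)^2" unfolding u_def True by (simp add: power2_eq_square algebra_simps)
    then have sa: "s = \<bar>1 - 2*x\<bar>" unfolding s_def by simp
    show ?thesis
    proof (cases "x \<le> 1/2")
      case True
      then have "s = 1 - 2*x" using sa by simp
      then have "1 + s = 2*(1-x)" by simp
      moreover have "1 - x \<noteq> 0" using True by simp
      ultimately have "(1+s)^3 = 2^3*(1-x)^3" "(1-x)^3 \<noteq> 0" by (simp_all only: power_mult_distrib) simp
      then have "(1+s)^3 = 8*(1-x)^3" "(1-x)^3 \<noteq> 0" by simp_all
      then have "Gf a x = 1" using Gs \<open>a = 0\<close> by simp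
      then show ?thesis using True \<open>a = 0\<close> by (simp add: gfun_def)
    next
      case False
      then have "s = 2*x - 1" using sa by simp
      then have "1 + s = 2*x" by simp
      moreover have "x \<noteq> 0" using False by simp
      ultimately have "(1+s)^3 = 2^3*x^3" by (simp only: power_mult_distrib)
      then have "(1+s)^3 = 8*x^3" by simp
      then have "Gf a x = (1-x)^3 / x^3" using Gs \<open>a = 0\<close> by simp
      then show ?thesis using False \<open>a = 0\<close> \<open>x \<noteq> 0\<close>
        by (simp add: gfun_def power2_eq_square power3_eq_cube)
    qed
  next
    case False
    show ?thesis
    proof (cases "x = 0")
      case True then show ?thesis by (simp add: gfun_def)
    next
      case x0: False
      have p: "(1 - s) * (1 + s) = u" using ss by (simp add: power2_eq_square algebra_simps)
      have "1 + s > 0" using s0 by simp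
      then have "1 - s = u / (1 + s)" using p by (simp add: field_simps)
      then have "(1 - s)^3 = u^3 / (1+s)^3" by (simp add: power_divide)
      moreover have "gfun a x = (1 - s)^3 / (8 * (1 - a)^2 * x^2)"
        using False x0 by (simp add: gfun_def s_def u_def mult.assoc)
      moreover note Gs
      moreover have "1 - a \<noteq> 0" using assms by simp
      moreover have u3: "u^3 = (8*(1-a)^2*x^2) * (x * (8*(1-a)*(1-x)^3))"
        unfolding u_def by (simp add: algebra_simps power2_eq_square power3_eq_cube)
      moreover have D: "8*(1-a)^2*x^2 \<noteq> 0" using x0 \<open>1 - a \<noteq> 0\<close> by simp
      ultimately have "gfun a x = (8*(1-a)^2*x^2) * (x * (8*(1-a)*(1-x)^3)) / (1+s)^3 / (8*(1-a)^2*x^2)"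
        by simp
      also have "\<dots> = x * (8*(1-a)*(1-x)^3) / (1+s)^3" using D by simp
      finally show ?thesis using Gs by simp
    qed
  qed
qed

locale twotype =
  fixes b1 b2 a1 a2 :: real
  assumes b1: "b1 > 0" and b2: "b2 > 0" and a1: "0 \<le> a1" "a1 < 1" and a2: "0 \<le> a2" "a2 < 1"
begin

definition S where "S p = S2 b1 b2 p"
definition Lam1 where "Lam1 p = b1 * psi (S p) * Gf a1 (b1 * fst p * psi (S p))"
definition Lam2 where "Lam2 p = b2 * psi (S p) * Gf a2 (b2 * snd p * psi (S p))"
definition hh where "hh p = (fst p * Lam1 p, snd p * Lam2 p)"
definition Q :: "(real \<times> real) set" where "Q = {p. 0 \<le> fst p \<and> 0 \<le> snd p}"

lemma S_nonneg: "p \<in> Q \<Longrightarrow> 0 \<le> S p"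
  using b1 b2 by (auto simp: S_def S2_def Q_def)

lemma fmap1: "p \<in> Q \<Longrightarrow> fmap b1 b2 b1 (fst p) p = b1 * fst p * psi (S p)"
proof -
  assume p: "p \<in> Q"
  show ?thesis
  proof (cases "S p = 0")
    case True
    moreover have "b1*fst p \<ge> 0" "b2 * snd p \<ge> 0" using p b1 b2 by (auto simp: Q_def intro!: mult_nonneg_nonneg)
    ultimately have "b1*fst p = 0" unfolding S_def S2_def by linarith
    then have "fst p = 0" using b1 by simp
    then show ?thesis using True by (simp add: fmap_def S_def)
  next
    case False then show ?thesis by (simp add: fmap_def S_def psi_def)
  qed
qed

lemma fmap2: "p \<in> Q \<Longrightarrow> fmap b1 b2 b2 (snd p) p = b2 * snd p * psi (S p)"
proof -
  assume p: "p \<in> Q"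
  show ?thesis
  proof (cases "S p = 0")
    case True
    moreover have "b1*fst p \<ge> 0" "b2 * snd p \<ge> 0" using p b1 b2 by (auto simp: Q_def intro!: mult_nonneg_nonneg)
    ultimately have "b2 * snd p = 0" unfolding S_def S2_def by linarith
    then have "snd p = 0" using b2 by simp
    then show ?thesis using True by (simp add: fmap_def S_def)
  next
    case False then show ?thesis by (simp add: fmap_def S_def psi_def)
  qed
qed

lemma f_range1: "p \<in> Q \<Longrightarrow> 0 \<le> b1 * fst p * psi (S p) \<and> b1 * fst p * psi (S p) < 1"
proof -
  assume p: "p \<in> Q"
  have ps: "psi (S p) > 0" using S_nonneg[OF p] psi_pos by simp
  have "b1 * fst p \<le> S p" using p b2 by (auto simp: S_def S2_def Q_def)
  then have "b1 * fst p * psi (S p) \<le> S p * psi (S p)" using ps by (simp add: mult_right_mono)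
  also have "\<dots> < 1" by (simp add: psi_mult mult.commute)
  finally show ?thesis using p b1 ps by (auto simp: Q_def)
qed

lemma f_range2: "p \<in> Q \<Longrightarrow> 0 \<le> b2 * snd p * psi (S p) \<and> b2 * snd p * psi (S p) < 1"
proof -
  assume p: "p \<in> Q"
  have ps: "psi (S p) > 0" using S_nonneg[OF p] psi_pos by simp
  have "b2 * snd p \<le> S p" using p b1 by (auto simp: S_def S2_def Q_def)
  then have "b2 * snd p * psi (S p) \<le> S p * psi (S p)" using ps by (simp add: mult_right_mono)
  also have "\<dots> < 1" by (simp add: psi_mult mult.commute)
  finally show ?thesis using p b2 ps by (auto simp: Q_def)
qed

lemma hmap_eq: "p \<in> Q \<Longrightarrow> hmap b1 b2 a1 a2 p = hh p"
proof -
  assume p: "p \<in> Q"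
  have "gfun a1 (b1 * fst p * psi (S p)) = (b1 * fst p * psi (S p)) * Gf a1 (b1 * fst p * psi (S p))"
    using f_range1[OF p] a1 by (intro gfun_eq) auto
  moreover have "gfun a2 (b2 * snd p * psi (S p)) = (b2 * snd p * psi (S p)) * Gf a2 (b2 * snd p * psi (S p))"
    using f_range2[OF p] a2 by (intro gfun_eq) auto
  ultimately show ?thesis using fmap1[OF p] fmap2[OF p]
    by (simp add: hmap_def hh_def Lam1_def Lam2_def)
qed

lemma Lam_pos: "p \<in> Q \<Longrightarrow> Lam1 p > 0 \<and> Lam2 p > 0"
proof -
  assume p: "p \<in> Q"
  have ps: "psi (S p) > 0" using S_nonneg[OF p] psi_pos by simp
  have "Gf a1 (b1 * fst p * psi (S p)) > 0" using f_range1[OF p] a1 by (intro Gf_pos) auto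
  moreover have "Gf a2 (b2 * snd p * psi (S p)) > 0" using f_range2[OF p] a2 by (intro Gf_pos) auto
  ultimately show ?thesis using ps b1 b2 by (simp add: Lam1_def Lam2_def)
qed

lemma hh_Q: "p \<in> Q \<Longrightarrow> hh p \<in> Q"
proof -
  assume p: "p \<in> Q"
  then have "Lam1 p > 0" "Lam2 p > 0" using Lam_pos by auto
  then show ?thesis using p by (simp add: hh_def Q_def)
qed

lemma iter_Q: "p \<in> Q \<Longrightarrow> (hh ^^ n) p \<in> Q \<and> (hmap b1 b2 a1 a2 ^^ n) p = (hh ^^ n) p"
  by (induction n) (auto simp: hh_Q hmap_eq)

lemma cont_Lam1: "continuous_on UNIV Lam1"
  unfolding Lam1_def S_def S2_def by (intro continuous_intros)

lemma cont_Lam2: "continuous_on UNIV Lam2"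
  unfolding Lam2_def S_def S2_def by (intro continuous_intros)

lemma cont_hh: "continuous_on UNIV hh"
  unfolding hh_def using cont_Lam1 cont_Lam2 by (intro continuous_intros)

lemma cont_iter: "continuous_on UNIV (hh ^^ n)"
proof (induction n)
  case 0 then show ?case by (simp add: continuous_on_id)
next
  case (Suc n)
  then show ?case unfolding funpow.simps
    by (rule continuous_on_compose) (rule continuous_on_subset[OF cont_hh], simp)
qed


definition F where "F n p = (\<Prod>k<n. Lam1 ((hh ^^ k) p))"

lemma cont_F: "continuous_on UNIV (F n)"
proof -
  have c: "continuous_on UNIV (\<lambda>p. Lam1 ((hh ^^ k) p))" for k
    by (rule continuous_on_compose2[OF cont_Lam1 cont_iter]) simp
  show ?thesis unfolding F_def[abs_def] by (intro continuous_on_prod c)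
qed

lemma fst_hh: "fst (hh q) = fst q * Lam1 q"
  by (simp add: hh_def)

lemma fst_iter: "fst ((hh ^^ n) p) = fst p * F n p"
proof (induction n)
  case 0 then show ?case by (simp add: F_def)
next
  case (Suc n)
  have "(hh^^Suc n) p = hh ((hh^^n) p)" by simp
  then have "fst ((hh^^Suc n) p) = fst ((hh^^n) p) * Lam1 ((hh^^n) p)" by (simp add: fst_hh)
  then show ?case by (simp add: Suc.IH F_def mult.assoc)
qed

lemma Lam1_axis: "Lam1 (0, y) = (1 - a1) * b1 * psi (b2 * y)"
  by (simp add: Lam1_def S_def S2_def Gf0)

lemma Gf_le: "0 \<le> a \<Longrightarrow> a < 1 \<Longrightarrow> 0 \<le> x \<Longrightarrow> x \<le> 1 \<Longrightarrow> Gf a x \<le> 8"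
proof -
  assume h: "0 \<le> a" "a < 1" "0 \<le> x" "x \<le> 1"
  have d: "1 \<le> (1 + sqrt (max 0 (1 - 4*(1-a)*x*(1-x))))^3"
    by (rule one_le_power) simp
  have n: "0 \<le> 8*(1-a)*(1-x)^3" using h by simp
  define N where "N = 8*(1-a)*(1-x)^3"
  define D where "D = (1 + sqrt (max 0 (1 - 4*(1-a)*x*(1-x))))^3"
  have "N / D \<le> N / 1" using d n unfolding N_def[symmetric] D_def[symmetric]
    by (intro divide_left_mono) auto
  then have "Gf a x \<le> 8*(1-a)*(1-x)^3" unfolding Gf_def N_def D_def by simp
  also have "\<dots> \<le> 8"
  proof -
    have "(1-x)^3 \<le> 1" using h by (intro power_le_one) auto
    then have "(1-a)*(1-x)^3 \<le> 1" using h by (intro mult_le_one) auto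
    moreover have "8*(1-a)*(1-x)^3 = 8*((1-a)*(1-x)^3)" by simp
    ultimately show ?thesis by linarith
  qed
  finally show ?thesis .
qed

lemma gfun_le_pbar: "0 \<le> a \<Longrightarrow> a < 1 \<Longrightarrow> 0 \<le> x \<Longrightarrow> x \<le> 1 \<Longrightarrow> gfun a x \<le> pbar a"
proof -
  assume h: "0 \<le> a" "a < 1" "0 \<le> x" "x \<le> 1"
  have "bdd_above (gfun a ` {0..1})"
  proof (rule bdd_aboveI2)
    fix y :: real assume "y \<in> {0..1}"
    then have y: "0 \<le> y" "y \<le> 1" by auto
    have "gfun a y = y * Gf a y" using gfun_eq[OF h(1,2) y] .
    also have "\<dots> \<le> y * 8" using Gf_le[OF h(1,2) y] y by (intro mult_left_mono) auto
    also have "\<dots> \<le> 8" using y by simp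
    finally show "gfun a y \<le> 8" .
  qed
  then show ?thesis unfolding pbar_def using h by (intro cSUP_upper) auto
qed

lemma snd_hmap_le: "p \<in> Q \<Longrightarrow> snd (hmap b1 b2 a1 a2 p) \<le> pbar a2"
proof -
  assume p: "p \<in> Q"
  have "snd (hmap b1 b2 a1 a2 p) = gfun a2 (b2 * snd p * psi (S p))"
    using fmap2[OF p] by (simp add: hmap_def)
  also have "\<dots> \<le> pbar a2" using f_range2[OF p] a2 by (intro gfun_le_pbar) auto
  finally show ?thesis .
qed

lemma pbar_nonneg: "0 \<le> pbar a2"
proof -
  have "gfun a2 0 = 0" by (simp add: gfun_def)
  then show ?thesis using gfun_le_pbar[OF a2, of 0] by simp
qed

lemma axis_good:
  assumes rho: "1 < (1-a1)*b1*rho" "0 < rho"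
    and x: "x \<in> {0..pbar a2}" and lt: "ereal rho < Psi_liminf b1 b2 a1 a2 x"
  shows "\<exists>n. 1 \<le> n \<and> F n (0,x) > 2"
proof -
  define phi where "phi = (1-a1)*b1"
  have phi: "phi > 0" using a1 b1 by (simp add: phi_def)
  have ev1: "eventually (\<lambda>n. ereal rho < ereal (Psi_n b1 b2 a1 a2 n x)) sequentially"
    using lt unfolding Psi_liminf_def by (rule less_LiminfD)
  obtain n0 where n0: "2 < (phi*rho)^n0" using real_arch_pow[of "phi*rho" 2] rho phi_def by auto
  have ev2: "eventually (\<lambda>n. 2 < (phi*rho)^n \<and> 1 \<le> n) sequentially"
    unfolding eventually_sequentially
  proof (intro exI[of _ "Suc n0"] allI impI)
    fix n assume "Suc n0 \<le> n"
    then have "(phi*rho)^n0 \<le> (phi*rho)^n" using rho phi_def by (intro power_increasing) auto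
    then show "2 < (phi*rho)^n \<and> 1 \<le> n" using n0 \<open>Suc n0 \<le> n\<close> by auto
  qed
  obtain n where n: "rho < Psi_n b1 b2 a1 a2 n x" "2 < (phi*rho)^n" "1 \<le> n"
    using eventually_happens'[OF sequentially_bot eventually_conj[OF ev1 ev2]] by auto
  have x0: "(0, x) \<in> Q" using x by (simp add: Q_def)
  have iQ: "(hh ^^ k) (0,x) \<in> Q" for k using iter_Q[OF x0] by blast
  have ieq: "(hmap b1 b2 a1 a2 ^^ k) (0,x) = (hh ^^ k) (0,x)" for k using iter_Q[OF x0] by blast
  have f0: "fst ((hh ^^ k) (0,x)) = 0" for k using fst_iter by simp
  define P where "P = (\<Prod>k<n. psi (b2 * snd ((hmap b1 b2 a1 a2 ^^ k) (0, x))))"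
  have Ppos: "P > 0" unfolding P_def
  proof (intro prod_pos ballI psi_pos)
    fix k assume "k \<in> {..<n}"
    show "0 \<le> b2 * snd ((hmap b1 b2 a1 a2 ^^ k) (0, x))"
      using iQ[of k] b2 by (simp add: ieq Q_def)
  qed
  have "rho < P powr (1 / real n)" using n(1) by (simp add: Psi_n_def P_def)
  then have "rho ^ n < (P powr (1 / real n)) ^ n" using rho n(3) by (intro power_strict_mono) auto
  also have "(P powr (1 / real n)) ^ n = P"
    using Ppos n(3) by (simp add: powr_realpow[symmetric] powr_powr)
  finally have rP: "rho ^ n < P" .
  have Lk: "Lam1 ((hh ^^ k) (0,x)) = phi * psi (b2 * snd ((hmap b1 b2 a1 a2 ^^ k) (0, x)))" for k
  proof -
    have "(hh ^^ k) (0,x) = (0, snd ((hh ^^ k) (0,x)))" using f0[of k] by (simp add: prod_eq_iff)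
    then have "Lam1 ((hh ^^ k) (0,x)) = Lam1 (0, snd ((hh ^^ k) (0,x)))" by metis
    then show ?thesis by (simp add: Lam1_axis ieq phi_def)
  qed
  have "F n (0,x) = phi^n * P" unfolding F_def P_def Lk by (simp add: prod.distrib)
  also have "\<dots> > phi^n * rho^n" using rP phi by simp
  finally have "F n (0,x) > (phi*rho)^n" by (simp add: power_mult_distrib)
  then show ?thesis using n by auto
qed


lemma block:
  assumes sig: "ereal ((1 - a1) * b1) * sigma b1 b2 a1 a2 > 1"
  shows "\<exists>e>0. \<exists>N. \<forall>p\<in>Q. 0 < fst p \<and> fst p < e \<and> snd p \<le> pbar a2 \<longrightarrow>
            (\<exists>m. 1 \<le> m \<and> m \<le> N \<and> fst ((hh^^m) p) > 2 * fst p)"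
proof -
  define phi where "phi = (1-a1)*b1"
  have phi: "phi > 0" using a1 b1 by (simp add: phi_def)
  have "sigma b1 b2 a1 a2 > ereal (1/phi)"
  proof (rule ccontr)
    assume "\<not> ?thesis"
    then have "sigma b1 b2 a1 a2 \<le> ereal (1/phi)" by simp
    then have "ereal phi * sigma b1 b2 a1 a2 \<le> ereal phi * ereal (1/phi)"
      using phi by (intro ereal_mult_left_mono) auto
    also have "\<dots> = 1" using phi by simp
    finally show False using sig unfolding phi_def by simp
  qed
  then obtain rho where rho: "ereal (1/phi) < ereal rho" "ereal rho < sigma b1 b2 a1 a2"
    using ereal_dense2 by blast
  have r0: "1/phi < rho" using rho(1) by simp
  have "0 < 1/phi" using phi by simp
  then have rpos: "0 < rho" using r0 by linarith
  have r1: "1 < (1-a1)*b1*rho" using r0 phi unfolding phi_def[symmetric]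
    by (simp add: pos_divide_less_eq mult.commute)
  have good: "\<exists>n. 1 \<le> n \<and> F n (0,x) > 2" if x: "x \<in> {0..pbar a2}" for x
  proof -
    have "sigma b1 b2 a1 a2 \<le> Psi_liminf b1 b2 a1 a2 x"
      unfolding sigma_def using x by (rule INF_lower)
    then have "ereal rho < Psi_liminf b1 b2 a1 a2 x" using rho(2) by (rule order.strict_trans2[rotated])
    then show ?thesis by (rule axis_good[OF r1 rpos x])
  qed
  define nn where "nn x = (SOME n. 1 \<le> n \<and> F n (0,x) > 2)" for x
  have nn: "1 \<le> nn x \<and> F (nn x) (0,x) > 2" if "x \<in> {0..pbar a2}" for x
    unfolding nn_def using someI_ex[OF good[OF that]] .
  define U where "U x = {p. 2 < F (nn x) p}" for x
  have Uo: "open (U x)" for x unfolding U_def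
    by (rule open_Collect_less) (rule continuous_on_const, rule cont_F)
  define C where "C = (\<lambda>x. (0::real, x)) ` {0..pbar a2}"
  have Cc: "compact C" unfolding C_def
    by (intro compact_continuous_image continuous_intros compact_Icc)
  have Ccov: "C \<subseteq> (\<Union>x\<in>{0..pbar a2}. U x)"
  proof
    fix y assume "y \<in> C"
    then obtain x where x: "x \<in> {0..pbar a2}" "y = (0,x)" unfolding C_def by blast
    then have "y \<in> U x" using nn[OF x(1)] by (simp add: U_def)
    then show "y \<in> (\<Union>x\<in>{0..pbar a2}. U x)" using x(1) by blast
  qed
  obtain C' where C': "C' \<subseteq> {0..pbar a2}" "finite C'" "C \<subseteq> (\<Union>x\<in>C'. U x)"
    using compactE_image[OF Cc Uo Ccov] by blast
  have "C \<subseteq> \<Union>(U ` C')" using C'(3) by simp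
  then obtain e where e: "0 < e" "\<And>y. y \<in> C \<Longrightarrow> \<exists>G \<in> U ` C'. ball y e \<subseteq> G"
    using Heine_Borel_lemma[OF Cc, of "U ` C'"] Uo by blast
  define N where "N = Max (nn ` C')"
  have main: "\<exists>m. 1 \<le> m \<and> m \<le> N \<and> fst ((hh^^m) p) > 2 * fst p"
    if p: "p \<in> Q" and h: "0 < fst p \<and> fst p < e \<and> snd p \<le> pbar a2" for p
  proof -
    have "snd p \<in> {0..pbar a2}" using p h by (simp add: Q_def)
    then have "(0, snd p) \<in> C" by (simp add: C_def)
    then obtain G where G: "G \<in> U ` C'" "ball (0, snd p) e \<subseteq> G" using e(2) by blast
    then obtain x where x: "x \<in> C'" "G = U x" by blast
    have "dist (0, snd p) p = fst p" using h by (cases p) (simp add: dist_Pair_Pair)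
    then have "p \<in> ball (0, snd p) e" using h by simp
    then have "p \<in> U x" using G x by blast
    then have F2: "F (nn x) p > 2" by (simp add: U_def)
    have "x \<in> {0..pbar a2}" using x C' by blast
    then have n1: "1 \<le> nn x" using nn by blast
    have nN: "nn x \<le> N" unfolding N_def using x C' by (intro Max_ge) auto
    have "fst ((hh^^(nn x)) p) = fst p * F (nn x) p" by (rule fst_iter)
    also have "\<dots> > fst p * 2" using F2 h by simp
    finally have "fst ((hh^^(nn x)) p) > 2 * fst p" by (simp add: mult.commute)
    then show ?thesis using n1 nN by blast
  qed
  show ?thesis using main e(1) by blast
qed

end


theorem mainTheorem19:
  fixes b1 b2 a1 a2 :: real and p0 :: "real \<times> real"
  assumes "b1 > 0" and "b2 > 0"
    and "0 \<le> a1" and "a1 < 1" and "0 \<le> a2" and "a2 < 1"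
    and "ereal ((1 - a1) * b1) * sigma b1 b2 a1 a2 > 1"
    and "0 < fst p0" and "fst p0 < 1" and "0 < snd p0" and "snd p0 < 1"
    and "fst p0 + snd p0 \<le> 1"
  shows "\<exists>cbar. 0 < cbar \<and> cbar < fst p0 \<and>
    (\<forall>c. 0 < c \<and> c \<le> cbar \<longrightarrow>
      (\<exists>kbar::nat. \<forall>n::nat. fst ((hmap b1 b2 a1 a2 ^^ n) p0) \<ge> c \<longrightarrow>
         (\<exists>k\<le>kbar. fst ((hmap b1 b2 a1 a2 ^^ (n + k)) p0) >
            3 / (2 * Inf {lam1 b1 b2 a1 a2 p | p. p \<in> {0<..pbar a1} \<times> {0..pbar a2}}) * c)))"
proof -
  interpret T: twotype b1 b2 a1 a2 using assms by unfold_locales auto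
  define q where "q n = (hmap b1 b2 a1 a2 ^^ n) p0" for n
  define r where "r = Inf {lam1 b1 b2 a1 a2 p | p. p \<in> {0<..pbar a1} \<times> {0..pbar a2}}"
  define A where "A = 3 / (2 * r)"
  have p0Q: "p0 \<in> T.Q" using assms by (simp add: T.Q_def)
  have qQ: "q n = (T.hh^^n) p0" "(T.hh^^n) p0 \<in> T.Q" for n
    using T.iter_Q[OF p0Q, of n] by (auto simp: q_def)
  have qpos: "fst (q n) > 0" for n
  proof -
    have "T.F n p0 > 0" unfolding T.F_def
    proof (intro prod_pos ballI)
      fix k assume "k \<in> {..<n}"
      show "0 < T.Lam1 ((T.hh ^^ k) p0)" using T.Lam_pos qQ(2) by blast
    qed
    then show ?thesis using qQ(1)[of n] T.fst_iter[of n p0] assms by simp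
  qed
  have qsnd: "snd (q n) \<le> pbar a2" if n1: "1 \<le> n" for n
  proof -
    obtain m where m: "n = Suc m" using n1 by (cases n) auto
    have "q n = hmap b1 b2 a1 a2 (q m)" by (simp add: q_def m)
    moreover have "q m \<in> T.Q" using qQ by simp
    ultimately show ?thesis using T.snd_hmap_le by simp
  qed
  have qadd: "(T.hh^^m) (q n) = q (n + m)" for n m
    by (simp add: qQ funpow_add add.commute)
  have "\<exists>cbar. 0 < cbar \<and> cbar < fst p0 \<and>
    (\<forall>c. 0 < c \<and> c \<le> cbar \<longrightarrow>
      (\<exists>kbar::nat. \<forall>n::nat. fst (q n) \<ge> c \<longrightarrow> (\<exists>k\<le>kbar. fst (q (n + k)) > A * c)))"
  proof (cases "r \<le> 0")
    case True
    have A0: "A \<le> 0" unfolding A_def using True by (intro divide_nonneg_nonpos) auto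
    show ?thesis
    proof (intro exI[of _ "fst p0 / 2"] conjI allI impI)
      show "0 < fst p0 / 2" "fst p0 / 2 < fst p0" using assms by auto
      fix c assume c: "0 < c \<and> c \<le> fst p0 / 2"
      have "A * c \<le> 0" using A0 c by (intro mult_nonpos_nonneg) auto
      then show "\<exists>kbar::nat. \<forall>n::nat. fst (q n) \<ge> c \<longrightarrow> (\<exists>k\<le>kbar. fst (q (n + k)) > A * c)"
        using c by (intro exI[of _ 0] allI impI) auto
    qed
  next
    case False
    then have Apos: "A > 0" unfolding A_def by simp
    obtain e N where e: "0 < e" and blk: "\<And>p. p \<in> T.Q \<Longrightarrow> 0 < fst p \<and> fst p < e \<and> snd p \<le> pbar a2 \<Longrightarrow>
            (\<exists>m. 1 \<le> m \<and> m \<le> N \<and> fst ((T.hh^^m) p) > 2 * fst p)"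
      using T.block[OF assms(7)] by blast
    obtain J where J: "A < 2^J" using real_arch_pow[of 2 A] by auto
    define cbar where "cbar = min (fst p0 / 2) (min (e / (2*A)) (fst (q 1) / (2*A)))"
    have cb0: "0 < cbar" unfolding cbar_def using assms e Apos qpos[of 1] by auto
    have cb1: "cbar < fst p0" unfolding cbar_def using assms by auto
    have cbe: "A * cbar \<le> e / 2"
    proof -
      have "cbar \<le> e / (2*A)" unfolding cbar_def by simp
      then have "A * cbar \<le> A * (e / (2*A))" using Apos by (intro mult_left_mono) auto
      also have "\<dots> = e / 2" using Apos by simp
      finally show ?thesis .
    qed
    have cbq: "2 * A * cbar \<le> fst (q 1)"
    proof -
      have "cbar \<le> fst (q 1) / (2*A)" unfolding cbar_def by simp
      then have "2 * A * cbar \<le> 2 * A * (fst (q 1) / (2*A))" using Apos by (intro mult_left_mono) auto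
      also have "\<dots> = fst (q 1)" using Apos by simp
      finally show ?thesis .
    qed
    show ?thesis
    proof (intro exI[of _ cbar] conjI cb0 cb1 allI impI)
      fix c assume c: "0 < c \<and> c \<le> cbar"
      have "A * c \<le> A * cbar" using c Apos by (intro mult_left_mono) auto
      then have Ace: "A * c < e" using cbe e by linarith
      have Aq: "A * c < fst (q 1)"
      proof -
        have "A * c \<le> A * cbar" using c Apos by (intro mult_left_mono) auto
        moreover have "0 < A * cbar" using Apos cb0 by simp
        ultimately show ?thesis using cbq by linarith
      qed
      show "\<exists>kbar::nat. \<forall>n::nat. fst (q n) \<ge> c \<longrightarrow> (\<exists>k\<le>kbar. fst (q (n + k)) > A * c)"
      proof (rule exI[of _ "J * N + 1"], intro allI impI)
        fix n assume qn: "c \<le> fst (q n)"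
        show "\<exists>k\<le>J * N + 1. fst (q (n + k)) > A * c"
        proof (cases "n = 0")
          case True
          then show ?thesis using Aq by (intro exI[of _ 1]) auto
        next
          case False
          then have n1: "1 \<le> n" by simp
          have ind: "(\<exists>k\<le>j*N. fst (q (n + k)) > A * c) \<or> (\<exists>k\<le>j*N. fst (q (n + k)) \<ge> 2^j * c)" for j
          proof (induction j)
            case 0 then show ?case using qn by (intro disjI2 exI[of _ 0]) auto
          next
            case (Suc j)
            then show ?case
            proof
              assume "\<exists>k\<le>j*N. fst (q (n + k)) > A * c"
              then obtain k where "k \<le> j*N" "fst (q (n + k)) > A * c" by blast
              moreover have "j * N \<le> Suc j * N" by simp
              ultimately show ?case by (intro disjI1 exI[of _ k]) auto
            next
              assume "\<exists>k\<le>j*N. fst (q (n + k)) \<ge> 2^j * c"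
              then obtain k where k: "k \<le> j*N" "fst (q (n + k)) \<ge> 2^j * c" by blast
              show ?case
              proof (cases "fst (q (n + k)) > A * c")
                case True
                moreover have "j * N \<le> Suc j * N" by simp
                ultimately show ?thesis using k by (intro disjI1 exI[of _ k]) auto
              next
                case False
                have "q (n+k) \<in> T.Q" using qQ by simp
                moreover have "0 < fst (q (n+k)) \<and> fst (q (n+k)) < e \<and> snd (q (n+k)) \<le> pbar a2"
                  using qpos False Ace qsnd n1 by auto
                ultimately obtain m where m: "1 \<le> m" "m \<le> N" "fst ((T.hh^^m) (q (n+k))) > 2 * fst (q (n+k))"
                  using blk by blast
                have "fst (q (n + (k+m))) > 2 * fst (q (n+k))" using m(3) qadd by (simp add: add.assoc)
                moreover have "2 * fst (q (n+k)) \<ge> 2^Suc j * c" using k(2) by simp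
                moreover have "k + m \<le> Suc j * N" using k(1) m(2) by simp
                ultimately show ?thesis by (intro disjI2 exI[of _ "k+m"]) auto
              qed
            qed
          qed
          have AJ: "2^J * c > A * c" using J c by simp
          from ind[of J] show ?thesis
          proof
            assume "\<exists>k\<le>J*N. fst (q (n + k)) > A * c"
            then obtain k where "k \<le> J*N" "fst (q (n + k)) > A * c" by blast
            then show ?thesis by (intro exI[of _ k]) auto
          next
            assume "\<exists>k\<le>J*N. fst (q (n + k)) \<ge> 2^J * c"
            then obtain k where "k \<le> J*N" "fst (q (n + k)) \<ge> 2^J * c" by blast
            then show ?thesis using AJ by (intro exI[of _ k]) auto
          qed
        qed
      qed
    qed
  qed
  then show ?thesis by (simp only: q_def A_def r_def)
qed

end
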